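(* Let $L>0$, $\tau>0$ and let $Z_1,\dots,Z_m$ be random variables with $\max_{1\le j\le m}\|Z_j\|_{\Psi_2(\cdot;L)}\le\tau$. Then for all $t>0$, $$P\Big(\max_{1\le j\le m}|Z_j|\ge \frac{\tau}{L}\Big(h_2^{-1}(L^2t/2)+h_2^{-1}\big(L^2\log(1+m)/2\big)\Big)\Big)\le 2e^{-t}.$$
   Context: For $x\ge 0$ let $h_2(x)=(1+x)\log(1+x)-x$, an increasing bijection of $[0,\infty)$ onto itself, with inverse $h_2^{-1}$. For $L>0$ let $\Psi_2(x;L)=\exp\big(\frac{2}{L^2}h_2(Lx)\big)-1$. The Orlicz norm is $\|X\|_{\Psi}=\inf\{c>0: E\Psi(|X|/c)\le 1\}$. *)

theory Defs
  imports "HOL-Probability.Probability"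
begin

definition h2 :: "real \<Rightarrow> real" where
  "h2 x = (1 + x) * ln (1 + x) - x"

definition h2_inv :: "real \<Rightarrow> real" where
  "h2_inv y = (THE x. 0 \<le> x \<and> h2 x = y)"

definition Psi2 :: "real \<Rightarrow> real \<Rightarrow> real" where
  "Psi2 L x = exp (2 / L^2 * h2 (L * x)) - 1"

text \<open>Orlicz norm, valued in the extended reals (infimum of the empty set is +infinity);
  the expectation of the nonnegative quantity is the nonnegative Lebesgue integral.\<close>
definition orlicz_norm :: "'a measure \<Rightarrow> (real \<Rightarrow> real) \<Rightarrow> ('a \<Rightarrow> real) \<Rightarrow> ereal" where
  "orlicz_norm M Psi X =
     Inf {ereal c | c. c > 0 \<and> (\<integral>\<^sup>+ x. ennreal (Psi (\<bar>X x\<bar> / c)) \<partial>M) \<le> 1}"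

end

theory Submission imports Defs begin


lemma h2_deriv: "x > -1 \<Longrightarrow> (h2 has_real_derivative ln (1 + x)) (at x)"
  unfolding h2_def[abs_def]
  by (auto intro!: derivative_eq_intros simp: field_simps)

lemma h2_cont: "x > -1 \<Longrightarrow> isCont h2 x"
  using h2_deriv DERIV_isCont by blast

lemma h2_cont_on: "a \<ge> 0 \<Longrightarrow> continuous_on {a..b} h2"
  by (intro continuous_at_imp_continuous_on) (auto intro: h2_cont)

lemma h2_0[simp]: "h2 0 = 0" by (simp add: h2_def)

lemma h2_mono: assumes "0 \<le> x" "x \<le> y" shows "h2 x \<le> h2 y"
proof (rule DERIV_nonneg_imp_increasing_open[of x y h2, OF assms(2)])
  fix z assume "x < z" "z < y"
  thus "\<exists>d. (h2 has_real_derivative d) (at z) \<and> 0 \<le> d"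
    using assms by (intro exI[of _ "ln (1+z)"]) (auto intro: h2_deriv)
qed (use assms h2_cont_on in auto)

lemma h2_strict: assumes "0 \<le> x" "x < y" shows "h2 x < h2 y"
proof -
  have "h2 x \<le> h2 ((x+y)/2)" using assms by (intro h2_mono) auto
  also have "\<dots> < h2 y"
    using assms by (intro DERIV_pos_imp_increasing[of "(x+y)/2" y h2])
       (auto intro!: exI[of _ "ln (1+_)"] h2_deriv)
  finally show ?thesis .
qed

lemma h2_nonneg: "0 \<le> x \<Longrightarrow> 0 \<le> h2 x"
  using h2_mono[of 0 x] by simp

lemma h2_super: assumes "0 \<le> a" "0 \<le> b" shows "h2 a + h2 b \<le> h2 (a + b)"
proof -
  let ?F = "\<lambda>s. h2 (s + b) - h2 s"
  have "?F 0 \<le> ?F a"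
  proof (rule DERIV_nonneg_imp_increasing_open[OF assms(1)])
    fix z assume z: "0 < z" "z < a"
    have "((\<lambda>s. h2 (s + b) - h2 s) has_real_derivative (ln (1 + (z + b)) - ln (1 + z))) (at z)"
      using z assms
      by (auto intro!: derivative_eq_intros DERIV_chain2[OF h2_deriv] h2_deriv)
    moreover have "ln (1 + (z + b)) - ln (1 + z) \<ge> 0" using z assms by simp
    ultimately show "\<exists>d. (?F has_real_derivative d) (at z) \<and> 0 \<le> d" by blast
  next
    show "continuous_on {0..a} ?F" using assms
      by (intro continuous_at_imp_continuous_on ballI continuous_intros
          continuous_at_compose[OF _ h2_cont, unfolded o_def] h2_cont) auto
  qed
  thus ?thesis by simp
qed

lemma h2_ge: assumes "exp 2 - 1 \<le> x" shows "x \<le> h2 x"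
proof -
  have e: "1 \<le> exp (2::real)" by simp
  have x0: "0 \<le> x" using assms e by linarith
  have "exp 2 \<le> 1 + x" using assms by linarith
  then have l: "2 \<le> ln (1 + x)" using x0 by (simp add: ln_ge_iff)
  have "(1 + x) * 2 \<le> (1 + x) * ln (1 + x)" using x0 l by (intro mult_left_mono) auto
  moreover have "(1 + x) * 2 = 2 + 2 * x" by simp
  ultimately show ?thesis unfolding h2_def by linarith
qed

lemma h2_big: assumes "0 \<le> y" shows "y \<le> h2 (max y (exp 2 - 1))"
proof -
  have "max y (exp 2 - 1) \<le> h2 (max y (exp 2 - 1))" by (rule h2_ge) simp
  moreover have "y \<le> max y (exp 2 - 1)" by simp
  ultimately show ?thesis by linarith
qed

lemma h2_inv: assumes "0 \<le> y" shows "0 \<le> h2_inv y" "h2 (h2_inv y) = y"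
proof -
  have "\<exists>x. 0 \<le> x \<and> x \<le> max y (exp 2 - 1) \<and> h2 x = y"
  proof (rule IVT')
    show "h2 0 \<le> y" using assms by simp
    show "y \<le> h2 (max y (exp 2 - 1))" by (rule h2_big[OF assms])
    show "0 \<le> max y (exp 2 - 1)" using assms by simp
    show "continuous_on {0..max y (exp 2 - 1)} h2" by (rule h2_cont_on) simp
  qed
  then obtain x where x: "0 \<le> x" "h2 x = y" by blast
  have u: "z = x" if z: "0 \<le> z \<and> h2 z = y" for z
  proof (rule ccontr)
    assume "z \<noteq> x"
    then consider "z < x" | "x < z" by linarith
    then show False
    proof cases
      case 1 then show False using h2_strict[of z x] z x by simp
    next
      case 2 then show False using h2_strict[of x z] z x by simp
    qed
  qed
  have "h2_inv y = x" unfolding h2_inv_def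
    by (rule the_equality) (use x u in blast)+
  thus "0 \<le> h2_inv y" "h2 (h2_inv y) = y" using x by auto
qed

lemma Psi2_mono: "L > 0 \<Longrightarrow> 0 \<le> x \<Longrightarrow> x \<le> y \<Longrightarrow> Psi2 L x \<le> Psi2 L y"
  unfolding Psi2_def by (auto intro!: h2_mono divide_right_mono)

theorem lemma9:
  fixes M :: "'a measure" and Z :: "nat \<Rightarrow> 'a \<Rightarrow> real"
    and L \<tau> t :: real and m :: nat
  assumes "prob_space M"
    and "m \<ge> 1"
    and "L > 0" and "\<tau> > 0"
    and "\<And>j. j \<in> {1..m} \<Longrightarrow> Z j \<in> borel_measurable M"
    and "\<And>j. j \<in> {1..m} \<Longrightarrow> orlicz_norm M (Psi2 L) (Z j) \<le> ereal \<tau>"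
    and "t > 0"
  shows "measure M {x \<in> space M. (MAX j\<in>{1..m}. \<bar>Z j x\<bar>) \<ge>
            \<tau> / L * (h2_inv (L^2 * t / 2) + h2_inv (L^2 * ln (1 + real m) / 2))}
         \<le> 2 * exp (- t)"
proof -
  interpret P: prob_space M by fact
  note L0 = \<open>L > 0\<close> and tau0 = \<open>\<tau> > 0\<close> and t0 = \<open>t > 0\<close> and m1 = \<open>m \<ge> 1\<close>
  define a where "a = h2_inv (L^2 * t / 2)"
  define b where "b = h2_inv (L^2 * ln (1 + real m) / 2)"
  have a0: "0 \<le> a" and ha: "h2 a = L^2 * t / 2"
    using h2_inv[of "L^2 * t / 2"] t0 unfolding a_def by auto
  have lnm: "0 \<le> ln (1 + real m)" by simp
  have b0: "0 \<le> b" and hb: "h2 b = L^2 * ln (1 + real m) / 2"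
    using h2_inv[of "L^2 * ln (1 + real m) / 2"] lnm unfolding b_def by auto
  define u where "u = (a + b) / L"
  have u0: "0 \<le> u" using a0 b0 L0 unfolding u_def by auto
  have thr: "\<tau> / L * (h2_inv (L^2 * t / 2) + h2_inv (L^2 * ln (1 + real m) / 2)) = \<tau> * u"
    unfolding u_def a_def[symmetric] b_def[symmetric] by simp
  define g where "g = (\<lambda>c. exp (2 / L^2 * h2 (L * (\<tau> * u / c))))"
  have "L * (\<tau> * u / \<tau>) = a + b" using L0 tau0 unfolding u_def by simp
  then have "h2 (L * (\<tau> * u / \<tau>)) \<ge> L^2 * t / 2 + L^2 * ln (1 + real m) / 2"
    using h2_super[OF a0 b0] ha hb by simp
  then have "2 / L^2 * h2 (L * (\<tau> * u / \<tau>)) \<ge> 2 / L^2 * (L^2 * t / 2 + L^2 * ln (1 + real m) / 2)"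
    using L0 by (intro mult_left_mono) auto
  also have "2 / L^2 * (L^2 * t / 2 + L^2 * ln (1 + real m) / 2) = t + ln (1 + real m)"
    using L0 by (simp add: field_simps)
  finally have "g \<tau> \<ge> exp (t + ln (1 + real m))" unfolding g_def by simp
  also have "exp (t + ln (1 + real m)) = exp t * (1 + real m)"
    by (simp add: exp_add)
  finally have gtau: "g \<tau> \<ge> exp t * (1 + real m)" .
  have et: "exp t > 1" using t0 by simp
  have "exp t * (1 + real m) > real m * exp t / 2 + 1"
  proof -
    have "0 \<le> real m * exp t" by simp
    moreover have "exp t * (1 + real m) = exp t + real m * exp t" by (simp add: algebra_simps)
    ultimately show ?thesis using et by linarith
  qed
  with gtau have gbig: "g \<tau> > real m * exp t / 2 + 1" by linarith
  have "isCont (\<lambda>c. L * (\<tau> * u / c)) \<tau>" using tau0 by (intro continuous_intros) auto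
  moreover have "isCont h2 (L * (\<tau> * u / \<tau>))"
    using L0 tau0 u0 by (intro h2_cont) (auto intro: less_le_trans[of _ 0])
  ultimately have "isCont (\<lambda>c. h2 (L * (\<tau> * u / c))) \<tau>"
    using isCont_o2 by blast
  then have "isCont g \<tau>" unfolding g_def by (intro continuous_intros)
  then have lim: "(g \<longlongrightarrow> g \<tau>) (at_right \<tau>)"
    unfolding isCont_def by (rule tendsto_mono[rotated]) (simp add: at_le)
  have ev: "eventually (\<lambda>c. g c > real m * exp t / 2 + 1 \<and> c > \<tau>) (at_right \<tau>)"
    using order_tendstoD(1)[OF lim gbig] eventually_at_right_less[of \<tau>]
    by (auto elim: eventually_elim2)
  obtain c where c: "g c > real m * exp t / 2 + 1" "c > \<tau>"
    using eventually_happens'[OF _ ev] trivial_limit_at_right_real by auto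
  define A where "A = g c"
  have A1: "A - 1 > 0" using c et m1 unfolding A_def
    by (smt (verit) divide_nonneg_pos mult_nonneg_nonneg of_nat_0_le_iff exp_gt_zero)
  have c0': "c > 0" using c tau0 by simp
  have each: "P.prob {x \<in> space M. \<tau> * u \<le> \<bar>Z j x\<bar>} \<le> 1 / (A - 1)" if j: "j \<in> {1..m}" for j
  proof -
    let ?S = "{ereal c' | c'. c' > 0 \<and> (\<integral>\<^sup>+ x. ennreal (Psi2 L (\<bar>Z j x\<bar> / c')) \<partial>M) \<le> 1}"
    have "Inf ?S \<le> ereal \<tau>" using assms(6)[OF j] unfolding orlicz_norm_def .
    also have "\<dots> < ereal c" using c by simp
    finally obtain s where "s \<in> ?S" "s < ereal c" by (auto simp: Inf_less_iff)
    then obtain c1 where c1: "c1 > 0" "(\<integral>\<^sup>+ x. ennreal (Psi2 L (\<bar>Z j x\<bar> / c1)) \<partial>M) \<le> 1" "c1 < c"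
      by auto
    have int: "(\<integral>\<^sup>+ x. ennreal (Psi2 L (\<bar>Z j x\<bar> / c)) \<partial>M) \<le> 1"
    proof -
      have "(\<integral>\<^sup>+ x. ennreal (Psi2 L (\<bar>Z j x\<bar> / c)) \<partial>M) \<le> (\<integral>\<^sup>+ x. ennreal (Psi2 L (\<bar>Z j x\<bar> / c1)) \<partial>M)"
        using c1 c0' L0 by (intro nn_integral_mono ennreal_leI Psi2_mono) (auto intro!: divide_left_mono)
      with c1 show ?thesis by order
    qed
    define S where "S = {x \<in> space M. \<tau> * u \<le> \<bar>Z j x\<bar>}"
    have Ss: "S \<in> sets M" unfolding S_def using assms(5)[OF j] by measurable
    have "ennreal (A - 1) * emeasure M S = (\<integral>\<^sup>+ x. ennreal (A - 1) * indicator S x \<partial>M)"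
      using Ss by (simp add: nn_integral_cmult_indicator)
    also have "\<dots> \<le> (\<integral>\<^sup>+ x. ennreal (Psi2 L (\<bar>Z j x\<bar> / c)) \<partial>M)"
    proof (intro nn_integral_mono)
      fix x assume x: "x \<in> space M"
      show "ennreal (A - 1) * indicator S x \<le> ennreal (Psi2 L (\<bar>Z j x\<bar> / c))"
      proof (cases "x \<in> S")
        case True
        then have "\<tau> * u \<le> \<bar>Z j x\<bar>" unfolding S_def by auto
        then have "Psi2 L (\<tau> * u / c) \<le> Psi2 L (\<bar>Z j x\<bar> / c)"
          using L0 c0' tau0 u0 by (intro Psi2_mono divide_right_mono) auto
        moreover have "Psi2 L (\<tau> * u / c) = A - 1" unfolding A_def g_def Psi2_def by simp
        ultimately show ?thesis using True by (simp add: ennreal_leI)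
      qed simp
    qed
    also have "\<dots> \<le> 1" by (rule int)
    finally have "ennreal (A - 1) * ennreal (P.prob S) \<le> 1"
      by (simp add: P.emeasure_eq_measure)
    then have "(A - 1) * P.prob S \<le> 1"
      using A1 by (simp add: ennreal_mult'[symmetric] ennreal_le_1)
    then show ?thesis using A1 unfolding S_def[symmetric] by (simp add: field_simps)
  qed
  have set_eq: "{x \<in> space M. (MAX j\<in>{1..m}. \<bar>Z j x\<bar>) \<ge> \<tau> * u}
      = (\<Union>j\<in>{1..m}. {x \<in> space M. \<tau> * u \<le> \<bar>Z j x\<bar>})"
    using m1 by (auto simp: Max_ge_iff)
  have "P.prob (\<Union>j\<in>{1..m}. {x \<in> space M. \<tau> * u \<le> \<bar>Z j x\<bar>})
      \<le> (\<Sum>j\<in>{1..m}. P.prob {x \<in> space M. \<tau> * u \<le> \<bar>Z j x\<bar>})"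
    using assms(5) by (intro P.finite_measure_subadditive_finite) auto
  also have "\<dots> \<le> (\<Sum>j\<in>{1..m}. 1 / (A - 1))" by (intro sum_mono each)
  also have "\<dots> = real m / (A - 1)" by simp
  also have "\<dots> \<le> real m / (real m * exp t / 2)"
    using c m1 A1 unfolding A_def by (intro divide_left_mono) (auto intro!: mult_pos_pos)
  also have "\<dots> = 2 * exp (- t)" using m1 by (simp add: exp_minus field_simps)
  finally show ?thesis unfolding thr set_eq .
qed

end
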